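(* Consider the $r$-cGA on $r\text{-OneMax}$ and let $p^{(t)}_{i,j}$, $(i,j)\in\{1,\dots,n\}\times\{0,\dots,r-1\}$, be the frequencies in the current iteration $t$. Let $x,y\in\{0,\dots,r-1\}^n$ be the two individuals sampled in this iteration, and for a position $i$ let $D_i:=\sum_{j\neq i}\mathbf{1}[x_j=r-1]-\sum_{j\neq i}\mathbf{1}[y_j=r-1]$. Then, for sufficiently large $n$, \[\Pr[D_i=0]\geq \frac{4}{9\left(2\sqrt{3\sum_{j\neq i}p^{(t)}_{j,r-1}(1-p^{(t)}_{j,r-1})}+1\right)}.\]
   Context: Let $n\geq 1$, $r\geq 2$ be integers and $K>0$. The $r$-cGA maximizing $f$ maintains frequencies $p^{(t)}_{i,j}$, initialized to $1/r$. In iteration $t$ it samples $x,y\in\{0,\dots,r-1\}^n$ independently, each position $i$ independently with $\Pr[x_i=j]=p^{(t)}_{i,j}$ (here $x,y$ denote these samples before any swapping); if $f(x)<f(y)$ it swaps them; then it sets $p^{(t+1)}_{i,j}=p^{(t)}_{i,j}+\frac1K(\mathbf{1}[x_i=j]-\mathbf{1}[y_i=j])$, with no margins. Here $f=r\text{-OneMax}$, $r\text{-OneMax}(x)=\sum_{i=1}^n\mathbf{1}[x_i=r-1]$. *)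

theory Defs
  imports "HOL-Probability.Probability"
begin

text \<open>Positions are indexed by 0..n-1 (paper: 1..n), values by 0..r-1.
  A frequency matrix p :: nat => nat => real gives p i j = Pr[x_i = j].\<close>

definition valid_freqs :: "nat \<Rightarrow> nat \<Rightarrow> (nat \<Rightarrow> nat \<Rightarrow> real) \<Rightarrow> bool" where
  "valid_freqs n r p \<longleftrightarrow>
     (\<forall>i<n. (\<forall>j<r. 0 \<le> p i j) \<and> (\<Sum>j<r. p i j) = 1)"

definition pos_pmf :: "nat \<Rightarrow> (nat \<Rightarrow> nat \<Rightarrow> real) \<Rightarrow> nat \<Rightarrow> nat pmf" where
  "pos_pmf r p i = embed_pmf (\<lambda>j. if j < r then p i j else 0)"

text \<open>Distribution of a sampled individual x in {0..r-1}^n (positions sampled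
  independently); x is a function nat => nat, equal to 0 outside {0..<n}.\<close>
definition indiv_pmf :: "nat \<Rightarrow> nat \<Rightarrow> (nat \<Rightarrow> nat \<Rightarrow> real) \<Rightarrow> (nat \<Rightarrow> nat) pmf" where
  "indiv_pmf n r p = Pi_pmf {..<n} 0 (pos_pmf r p)"

definition D :: "nat \<Rightarrow> nat \<Rightarrow> nat \<Rightarrow> (nat \<Rightarrow> nat) \<Rightarrow> (nat \<Rightarrow> nat) \<Rightarrow> int" where
  "D n r i x y = int (card {j \<in> {..<n} - {i}. x j = r - 1})
                - int (card {j \<in> {..<n} - {i}. y j = r - 1})"

end

theory Submission
  imports Defs
begin

lemma pmf_pos_pmf:
  assumes "\<forall>j<r. 0 \<le> p i j" "(\<Sum>j<r. p i j) = 1"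
  shows "pmf (pos_pmf r p i) k = (if k < r then p i k else 0)"
proof -
  have "(\<integral>\<^sup>+x. ennreal (if x < r then p i x else 0) \<partial>count_space UNIV)
        = (\<Sum>x\<in>{..<r}. ennreal (if x < r then p i x else 0))"
    by (rule nn_integral_count_space') auto
  also have "\<dots> = ennreal (\<Sum>x<r. p i x)"
    using assms(1) by (subst sum_ennreal) auto
  finally have "(\<integral>\<^sup>+x. ennreal (if x < r then p i x else 0) \<partial>count_space UNIV) = 1"
    using assms(2) by simp
  then show ?thesis unfolding pos_pmf_def
    by (subst pmf_embed_pmf) (use assms(1) in auto)
qed

definition XX :: "nat set \<Rightarrow> nat \<Rightarrow> (nat \<Rightarrow> nat) \<Rightarrow> nat" where
  "XX S r x = card {j\<in>S. x j = r - 1}"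

lemma XX_sum: "finite S \<Longrightarrow> real (XX S r x) = (\<Sum>j\<in>S. if x j = r - 1 then 1 else 0)"
  unfolding XX_def by (simp add: sum.If_cases Int_def)

lemma expect_comp:
  assumes "j < n"
  shows "measure_pmf.expectation (indiv_pmf n r p) (\<lambda>x. g (x j) :: real)
       = measure_pmf.expectation (pos_pmf r p j) g"
proof -
  have "map_pmf (\<lambda>f. f j) (indiv_pmf n r p) = pos_pmf r p j"
    unfolding indiv_pmf_def using assms by (subst Pi_pmf_component) auto
  then show ?thesis
    by (metis integral_map_pmf)
qed


lemma fin_set:
  assumes "valid_freqs n r p"
  shows "finite (set_pmf (indiv_pmf n r p))"
proof -
  have "finite (set_pmf (pos_pmf r p i))" if "i < n" for i
  proof (rule finite_subset[of _ "{..<r}"])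
    show "set_pmf (pos_pmf r p i) \<subseteq> {..<r}"
      using assms that by (auto simp: set_pmf_eq pmf_pos_pmf valid_freqs_def split: if_splits)
  qed auto
  then show ?thesis unfolding indiv_pmf_def
    by (subst set_Pi_pmf) (auto intro!: finite_PiE_dflt)
qed

lemma E_ind:
  assumes "valid_freqs n r p" "j < n" "r \<ge> 1"
  shows "measure_pmf.expectation (indiv_pmf n r p) (\<lambda>x. if x j = r - 1 then 1 else 0) = p j (r - 1)"
proof -
  have "measure_pmf.expectation (indiv_pmf n r p) (\<lambda>x. if x j = r - 1 then 1 else 0::real)
     = measure_pmf.expectation (pos_pmf r p j) (\<lambda>v. if v = r - 1 then 1 else 0)"
    using expect_comp[OF assms(2), where r=r and p=p and g="\<lambda>v. if v = r - 1 then 1 else 0"]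
    by simp
  also have "\<dots> = measure_pmf.expectation (pos_pmf r p j) (indicator {r - 1})"
    by (intro Bochner_Integration.integral_cong) (auto simp: indicator_def)
  also have "\<dots> = pmf (pos_pmf r p j) (r - 1)"
    by (simp add: measure_pmf_single)
  also have "\<dots> = p j (r - 1)"
    using assms by (subst pmf_pos_pmf) (auto simp: valid_freqs_def)
  finally show ?thesis .
qed

lemma E_ind2:
  assumes "valid_freqs n r p" "j < n" "k < n" "j \<noteq> k" "r \<ge> 1"
  shows "measure_pmf.expectation (indiv_pmf n r p)
     (\<lambda>x. (if x j = r - 1 then 1 else 0) * (if x k = r - 1 then 1 else 0)) = p j (r - 1) * p k (r - 1)"
proof -
  define f where "f = (\<lambda>l. if l = j \<or> l = k then (\<lambda>v::nat. if v = r - 1 then 1 else 0::real) else (\<lambda>_. 1))"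
  have prod: "(\<Prod>l\<in>{..<n}. f l (x l)) = (if x j = r - 1 then 1 else 0) * (if x k = r - 1 then 1 else 0)" for x
  proof -
    have "(\<Prod>l\<in>{..<n}. f l (x l)) = (\<Prod>l\<in>{j,k}. f l (x l))"
      using assms by (intro prod.mono_neutral_right) (auto simp: f_def)
    then show ?thesis using assms by (simp add: f_def)
  qed
  have fin: "finite (set_pmf (pos_pmf r p l))" if "l < n" for l
  proof (rule finite_subset[of _ "{..<r}"])
    show "set_pmf (pos_pmf r p l) \<subseteq> {..<r}"
      using assms that by (auto simp: set_pmf_eq pmf_pos_pmf valid_freqs_def split: if_splits)
  qed auto
  have "measure_pmf.expectation (indiv_pmf n r p)
     (\<lambda>x. (if x j = r - 1 then 1 else 0) * (if x k = r - 1 then 1 else 0))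
     = measure_pmf.expectation (indiv_pmf n r p) (\<lambda>x. \<Prod>l\<in>{..<n}. f l (x l))"
    by (simp add: prod)
  also have "\<dots> = (\<Prod>l\<in>{..<n}. measure_pmf.expectation (pos_pmf r p l) (f l))"
    unfolding indiv_pmf_def
    by (rule expectation_prod_Pi_pmf) (auto simp: f_def intro!: integrable_measure_pmf_finite fin)
  also have "\<dots> = (\<Prod>l\<in>{j,k}. measure_pmf.expectation (pos_pmf r p l) (f l))"
    using assms by (intro prod.mono_neutral_right) (auto simp: f_def)
  also have "\<dots> = measure_pmf.expectation (pos_pmf r p j) (\<lambda>v. if v = r - 1 then 1 else 0)
     * measure_pmf.expectation (pos_pmf r p k) (\<lambda>v. if v = r - 1 then 1 else 0)"
    using assms by (simp add: f_def)
  also have "\<dots> = p j (r - 1) * p k (r - 1)"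
    using E_ind[OF assms(1,2,5)] E_ind[OF assms(1,3,5)]
      expect_comp[OF assms(2), where r=r and p=p and g="\<lambda>v. if v = r - 1 then 1 else 0"]
      expect_comp[OF assms(3), where r=r and p=p and g="\<lambda>v. if v = r - 1 then 1 else 0"]
    by simp
  finally show ?thesis .
qed


lemma cov:
  assumes "valid_freqs n r p" "j < n" "k < n" "r \<ge> 1"
  shows "measure_pmf.expectation (indiv_pmf n r p)
     (\<lambda>x. ((if x j = r - 1 then 1 else 0) - p j (r - 1)) * ((if x k = r - 1 then 1 else 0) - p k (r - 1)))
     = (if j = k then p j (r - 1) * (1 - p j (r - 1)) else 0)"
proof -
  let ?A = "indiv_pmf n r p"
  define I where "I = (\<lambda>l (x::nat\<Rightarrow>nat). if x l = r - 1 then 1 else (0::real))"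
  define q where "q = (\<lambda>l. p l (r - 1))"
  have int: "integrable (measure_pmf ?A) f" for f :: "_ \<Rightarrow> real"
    by (rule integrable_measure_pmf_finite[OF fin_set[OF assms(1)]])
  have eq: "(\<lambda>x. (I j x - q j) * (I k x - q k)) = (\<lambda>x. (I j x * I k x - q k * I j x) - (q j * I k x - q j * q k))"
    by (auto simp: algebra_simps)
  have "measure_pmf.expectation ?A (\<lambda>x. (I j x - q j) * (I k x - q k))
     = measure_pmf.expectation ?A (\<lambda>x. I j x * I k x) - q k * measure_pmf.expectation ?A (I j)
       - (q j * measure_pmf.expectation ?A (I k) - q j * q k)"
    unfolding eq by (simp add: Bochner_Integration.integral_diff[OF int int] int)
  also have "\<dots> = (if j = k then q j * (1 - q j) else 0)"
  proof (cases "j = k")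
    case True
    have "(\<lambda>x. I j x * I k x) = I j" using True by (auto simp: I_def fun_eq_iff)
    then show ?thesis using True E_ind[OF assms(1,2,4)] unfolding I_def q_def
      by (simp add: algebra_simps)
  next
    case False
    then show ?thesis using E_ind[OF assms(1,2,4)] E_ind[OF assms(1,3,4)] E_ind2[OF assms(1,2,3) False assms(4)]
      unfolding I_def q_def by (simp add: algebra_simps)
  qed
  finally show ?thesis unfolding I_def q_def .
qed

lemma var_sum:
  assumes "valid_freqs n r p" "S \<subseteq> {..<n}" "r \<ge> 1"
  shows "measure_pmf.expectation (indiv_pmf n r p)
     (\<lambda>x. ((\<Sum>j\<in>S. if x j = r - 1 then 1 else 0) - (\<Sum>j\<in>S. p j (r - 1)))\<^sup>2)
     = (\<Sum>j\<in>S. p j (r - 1) * (1 - p j (r - 1)))"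
proof -
  let ?A = "indiv_pmf n r p"
  define I where "I = (\<lambda>l (x::nat\<Rightarrow>nat). if x l = r - 1 then 1 else (0::real))"
  define q where "q = (\<lambda>l. p l (r - 1))"
  have finS: "finite S" using assms(2) finite_subset by blast
  have int: "integrable (measure_pmf ?A) f" for f :: "_ \<Rightarrow> real"
    by (rule integrable_measure_pmf_finite[OF fin_set[OF assms(1)]])
  have sq: "((\<Sum>j\<in>S. I j x) - (\<Sum>j\<in>S. q j))\<^sup>2 = (\<Sum>j\<in>S. \<Sum>k\<in>S. (I j x - q j) * (I k x - q k))" for x
    by (simp add: power2_eq_square sum_subtractf[symmetric] sum_product)
  have "measure_pmf.expectation ?A (\<lambda>x. ((\<Sum>j\<in>S. I j x) - (\<Sum>j\<in>S. q j))\<^sup>2)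
     = (\<Sum>j\<in>S. \<Sum>k\<in>S. measure_pmf.expectation ?A (\<lambda>x. (I j x - q j) * (I k x - q k)))"
    unfolding sq by (simp add: Bochner_Integration.integral_sum int)
  also have "\<dots> = (\<Sum>j\<in>S. \<Sum>k\<in>S. (if j = k then q j * (1 - q j) else 0))"
    unfolding I_def q_def
    by (intro sum.cong refl, subst cov[OF assms(1) _ _ assms(3)]) (use assms(2) in auto)
  also have "\<dots> = (\<Sum>j\<in>S. q j * (1 - q j))"
    using finS by (simp add: sum.delta)
  finally show ?thesis unfolding I_def q_def .
qed


lemma card_J:
  fixes \<mu> a :: real
  assumes "a > 0"
  shows "finite {k::nat. \<bar>real k - \<mu>\<bar> < a} \<and> real (card {k::nat. \<bar>real k - \<mu>\<bar> < a}) < 2 * a + 1"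
proof -
  define J where "J = {k::nat. \<bar>real k - \<mu>\<bar> < a}"
  have "J \<subseteq> {..nat \<lceil>\<mu> + a\<rceil>}"
  proof
    fix k assume "k \<in> J"
    then have "real k < \<mu> + a" by (auto simp: J_def)
    then have "real k \<le> \<lceil>\<mu> + a\<rceil>" by linarith
    then have "int k \<le> \<lceil>\<mu> + a\<rceil>" by (metis of_int_le_iff of_int_of_nat_eq)
    then show "k \<in> {..nat \<lceil>\<mu> + a\<rceil>}" by (simp add: le_nat_iff)
  qed
  then have fin: "finite J" using finite_subset by blast
  have "real (card J) < 2 * a + 1"
  proof (cases "J = {}")
    case True then show ?thesis using assms by simp
  next
    case False
    have "J \<subseteq> {Min J..Max J}" using fin by auto
    then have "card J \<le> card {Min J..Max J}" by (intro card_mono) auto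
    also have "\<dots> = Max J + 1 - Min J" by simp
    finally have c: "card J \<le> Max J + 1 - Min J" .
    have "Max J \<in> J" "Min J \<in> J" using fin False by auto
    then have "real (Max J) - real (Min J) < 2 * a" unfolding J_def by auto
    moreover have "Min J \<le> Max J" using fin False by simp
    ultimately show ?thesis using c by (simp add: of_nat_diff)
  qed
  then show ?thesis using fin unfolding J_def by simp
qed


lemma main_bound:
  assumes r: "r \<ge> 2" and v: "valid_freqs n r p" and i: "i < n"
  shows "measure_pmf.prob (pair_pmf (indiv_pmf n r p) (indiv_pmf n r p)) {(x, y). D n r i x y = 0}
     \<ge> 4 / (9 * (2 * sqrt (3 * (\<Sum>j\<in>{..<n} - {i}. p j (r - 1) * (1 - p j (r - 1)))) + 1))"
proof -
  define S where "S = {..<n} - {i}"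
  define A where "A = indiv_pmf n r p"
  define X where "X = XX S r"
  define M where "M = map_pmf X A"
  define q where "q = (\<lambda>j. p j (r - 1))"
  define \<mu> where "\<mu> = (\<Sum>j\<in>S. q j)"
  define \<sigma>2 where "\<sigma>2 = (\<Sum>j\<in>S. q j * (1 - q j))"
  have r1: "r \<ge> 1" using r by simp
  have finS: "finite S" and Ssub: "S \<subseteq> {..<n}" unfolding S_def by auto
  have q01: "0 \<le> q j \<and> q j \<le> 1" if "j < n" for j
  proof -
    have "q j \<le> (\<Sum>l<r. p j l)" unfolding q_def
      using v that r1 by (intro member_le_sum) (auto simp: valid_freqs_def)
    then show ?thesis using v that r1 by (auto simp: valid_freqs_def q_def)
  qed
  have s2: "\<sigma>2 \<ge> 0" unfolding \<sigma>2_def using q01 Ssub by (intro sum_nonneg) auto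
  have finA: "finite (set_pmf A)" unfolding A_def by (rule fin_set[OF v])
  have intA: "integrable (measure_pmf A) f" for f :: "_ \<Rightarrow> real"
    by (rule integrable_measure_pmf_finite[OF finA])
  have finM: "finite (set_pmf M)" unfolding M_def using finA by simp
  have intM: "integrable (measure_pmf M) f" for f :: "_ \<Rightarrow> real"
    by (rule integrable_measure_pmf_finite[OF finM])
  have Xsum: "real (X x) = (\<Sum>j\<in>S. if x j = r - 1 then 1 else 0)" for x
    unfolding X_def using XX_sum[OF finS] .
  have EM: "measure_pmf.expectation M real = \<mu>"
  proof -
    have "measure_pmf.expectation M real = measure_pmf.expectation A (\<lambda>x. real (X x))"
      unfolding M_def by simp
    also have "\<dots> = measure_pmf.expectation A (\<lambda>x. \<Sum>j\<in>S. if x j = r - 1 then 1 else 0)"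
      by (simp add: Xsum)
    also have "\<dots> = (\<Sum>j\<in>S. measure_pmf.expectation A (\<lambda>x. if x j = r - 1 then 1 else 0))"
      by (simp add: Bochner_Integration.integral_sum intA)
    also have "\<dots> = \<mu>" unfolding \<mu>_def q_def A_def
      using E_ind[OF v _ r1] Ssub by (intro sum.cong refl) auto
    finally show ?thesis .
  qed
  have VM: "measure_pmf.variance M real = \<sigma>2"
  proof -
    have "measure_pmf.variance M real = measure_pmf.expectation A (\<lambda>x. (real (X x) - \<mu>)\<^sup>2)"
      unfolding M_def using EM unfolding M_def by simp
    also have "\<dots> = \<sigma>2"
      unfolding Xsum \<mu>_def \<sigma>2_def q_def A_def by (rule var_sum[OF v Ssub r1])
    finally show ?thesis .
  qed
  define a where "a = (if \<sigma>2 > 0 then sqrt (3 * \<sigma>2) else 1/4)"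
  have a0: "a > 0" unfolding a_def by auto
  have ratio: "\<sigma>2 / a\<^sup>2 \<le> 1/3"
  proof (cases "\<sigma>2 > 0")
    case True then show ?thesis unfolding a_def by simp
  next
    case False then have "\<sigma>2 = 0" using s2 by simp
    then show ?thesis by simp
  qed
  have cheb: "measure_pmf.prob M {k \<in> space (measure_pmf M). \<bar>real k - \<mu>\<bar> \<ge> a} \<le> \<sigma>2 / a\<^sup>2"
    using measure_pmf.Chebyshev_inequality[of real M a] a0 intM EM VM by simp
  define J where "J = {k::nat. \<bar>real k - \<mu>\<bar> < a}"
  have finJ: "finite J" and cardJ: "real (card J) < 2 * a + 1"
    using card_J[OF a0, of \<mu>] unfolding J_def by auto
  have "measure_pmf.prob M J = 1 - measure_pmf.prob M {k \<in> space (measure_pmf M). \<bar>real k - \<mu>\<bar> \<ge> a}"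
  proof -
    have "J = space (measure_pmf M) - {k \<in> space (measure_pmf M). \<bar>real k - \<mu>\<bar> \<ge> a}"
      unfolding J_def by auto
    then show ?thesis by (simp only:) (rule measure_pmf.prob_compl, simp)
  qed
  then have PJ: "measure_pmf.prob M J \<ge> 2/3" using cheb ratio by linarith
  have PJs: "measure_pmf.prob M J = (\<Sum>k\<in>J. pmf M k)"
    using finJ by (rule measure_measure_pmf_finite)
  have CS: "(\<Sum>k\<in>J. pmf M k)\<^sup>2 \<le> (\<Sum>k\<in>J. (pmf M k)\<^sup>2) * card J"
    by (rule sum_squared_le_sum_of_squares)
  have cpos: "card J > 0"
  proof (rule ccontr)
    assume "\<not> card J > 0"
    then have "J = {}" using finJ by simp
    then show False using PJ by simp
  qed
  have cle: "real (card J) \<le> 2 * sqrt (3 * \<sigma>2) + 1"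
  proof (cases "\<sigma>2 > 0")
    case True then show ?thesis using cardJ unfolding a_def by simp
  next
    case False then have "\<sigma>2 = 0" using s2 by simp
    moreover have "card J < 2" using cardJ False unfolding a_def by simp
    ultimately show ?thesis by simp
  qed
  have "(2/3)\<^sup>2 \<le> (\<Sum>k\<in>J. pmf M k)\<^sup>2"
    using PJ PJs by (intro power_mono) auto
  then have "4/9 \<le> (\<Sum>k\<in>J. (pmf M k)\<^sup>2) * card J" using CS by (simp add: power2_eq_square)
  then have "4/9 \<le> (\<Sum>k\<in>J. (pmf M k)\<^sup>2) * (2 * sqrt (3 * \<sigma>2) + 1)"
    by (smt (verit, best) cle mult_left_mono sum_nonneg zero_le_power2)
  then have h4: "4 \<le> 9 * ((\<Sum>k\<in>J. (pmf M k)\<^sup>2) * (2 * sqrt (3 * \<sigma>2) + 1))"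
    by linarith
  have pos: "0 < 9 * (2 * sqrt (3 * \<sigma>2) + 1)" using s2 by (simp add: add_nonneg_pos)
  have low: "4 / (9 * (2 * sqrt (3 * \<sigma>2) + 1)) \<le> (\<Sum>k\<in>J. (pmf M k)\<^sup>2)"
    using h4 by (subst pos_divide_le_eq[OF pos]) (simp add: algebra_simps)
  have "(\<Sum>k\<in>J. (pmf M k)\<^sup>2) = measure_pmf.prob (pair_pmf M M) ((\<lambda>k. (k, k)) ` J)"
  proof -
    have "measure_pmf.prob (pair_pmf M M) ((\<lambda>k. (k, k)) ` J) = (\<Sum>z\<in>(\<lambda>k. (k, k)) ` J. pmf (pair_pmf M M) z)"
      using finJ by (intro measure_measure_pmf_finite) auto
    also have "\<dots> = (\<Sum>k\<in>J. pmf (pair_pmf M M) (k, k))"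
      by (subst sum.reindex) (auto simp: inj_on_def)
    finally show ?thesis by (simp add: pmf_pair power2_eq_square)
  qed
  also have "\<dots> \<le> measure_pmf.prob (pair_pmf M M) {(a, b). a = b}"
    by (intro measure_pmf.finite_measure_mono) auto
  also have "\<dots> = measure_pmf.prob (pair_pmf A A) {(x, y). D n r i x y = 0}"
  proof -
    have "pair_pmf M M = map_pmf (\<lambda>(x, y). (X x, X y)) (pair_pmf A A)"
      unfolding M_def by (simp add: map_pair)
    moreover have "(\<lambda>(x, y). (X x, X y)) -` {(a, b). a = b} = {(x, y). D n r i x y = 0}"
      unfolding X_def XX_def D_def S_def by auto
    ultimately show ?thesis by simp
  qed
  finally show ?thesis using low unfolding A_def \<sigma>2_def q_def S_def by simp
qed


theorem lemma2:
  fixes r :: nat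
  assumes "r \<ge> 2"
  shows "\<exists>N. \<forall>n \<ge> N. \<forall>p i. valid_freqs n r p \<longrightarrow> i < n \<longrightarrow>
     measure_pmf.prob (pair_pmf (indiv_pmf n r p) (indiv_pmf n r p))
        {(x, y). D n r i x y = 0}
     \<ge> 4 / (9 * (2 * sqrt (3 * (\<Sum>j\<in>{..<n} - {i}. p j (r - 1) * (1 - p j (r - 1)))) + 1))"
  using main_bound[OF assms] by blast

end
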